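(* Let $k\ge 1$ be a fixed integer and let $n$ be sufficiently large with respect to $k$. Let $G$ be a graph of order $n$ with $|E(G)|\le kn$ and $\Delta(G)<2n/3+o(n)$. Let $T$ be a tree with $|V(T)|\le n$ and $\Delta(T)<60(2k+1)n^{3/4}$. Let $I\subset V(G)$ with $|I|\le k$ such that $d_G(v)\le 2k$ for every $v\in I$. Let $I'\subset V(T)$ with $|I'|=|I|$ such that $d_T(v')\le 2$ for every $v'\in I'$. Suppose there is a packing $h':I'\to I$ of $T[I']$ and $G[I]$. Then there is a packing $f':V(T)\to V(G)$ of $T$ and $G$ such that (1) $\Delta(f'(T)\oplus G)\le 2n/3+o(n)$, and (2) $f'(v')=h'(v')$ for every $v'\in I'$.
   Context: For graphs $H_1,H_2$ with $|V(H_1)|\le |V(H_2)|$, an injection $f:V(H_1)\to V(H_2)$ is a packing of $H_1$ and $H_2$ if $E(f(H_1))\cap E(H_2)=\emptyset$, where $f(H_1)$ is the graph on $V(H_2)$ with edge set $\{f(u)f(v):uv\in E(H_1)\}$. For graphs $G,H$ (vertex sets not necessarily disjoint), $G\oplus H$ is the graph with vertex set $V(G)\cup V(H)$ and edge set $E(G)\cup E(H)$. $T[I']$, $G[I]$ denote induced subgraphs; $\Delta$ is the maximum degree, $d_G(v)$ the degree of $v$ in $G$. The $o(n)$ terms are with respect to $n\to\infty$ for fixed $k$. *)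

theory Defs
  imports Complex_Main "HOL-Library.Landau_Symbols"
begin

definition sgraph :: "'a set \<Rightarrow> 'a set set \<Rightarrow> bool" where
  "sgraph V E \<longleftrightarrow> finite V \<and> (\<forall>e\<in>E. e \<subseteq> V \<and> card e = 2)"

definition degree :: "'a set set \<Rightarrow> 'a \<Rightarrow> nat" where
  "degree E v = card {e\<in>E. v \<in> e}"

definition maxdeg :: "'a set \<Rightarrow> 'a set set \<Rightarrow> nat" where
  "maxdeg V E = Max (insert 0 (degree E ` V))"

definition induced :: "'a set set \<Rightarrow> 'a set \<Rightarrow> 'a set set" where
  "induced E S = {e\<in>E. e \<subseteq> S}"

definition adj :: "'a set set \<Rightarrow> ('a \<times> 'a) set" where
  "adj E = {(u, v). {u, v} \<in> E}"

definition connected_graph :: "'a set \<Rightarrow> 'a set set \<Rightarrow> bool" where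
  "connected_graph V E \<longleftrightarrow> (\<forall>u\<in>V. \<forall>v\<in>V. (u, v) \<in> (adj E)\<^sup>*)"

definition tree :: "'a set \<Rightarrow> 'a set set \<Rightarrow> bool" where
  "tree V E \<longleftrightarrow> sgraph V E \<and> V \<noteq> {} \<and> connected_graph V E \<and> card E = card V - 1"

definition packing :: "'a set \<Rightarrow> 'a set set \<Rightarrow> 'b set \<Rightarrow> 'b set set \<Rightarrow> ('a \<Rightarrow> 'b) \<Rightarrow> bool" where
  "packing V1 E1 V2 E2 f \<longleftrightarrow>
     inj_on f V1 \<and> f ` V1 \<subseteq> V2 \<and> ((\<lambda>e. f ` e) ` E1) \<inter> E2 = {}"

end

theory Submission
  imports Defs
begin

definition nbrs :: "'a set set \<Rightarrow> 'a \<Rightarrow> 'a set" where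
  "nbrs E v = {w. {v,w} \<in> E}"

lemma sg_finV: "sgraph V E \<Longrightarrow> finite V" by (simp add: sgraph_def)

lemma sg_finE: "sgraph V E \<Longrightarrow> finite E"
proof -
  assume "sgraph V E"
  hence "E \<subseteq> Pow V" "finite V" by (auto simp: sgraph_def)
  thus "finite E" by (meson finite_Pow_iff finite_subset)
qed

lemma sg_edge: "sgraph V E \<Longrightarrow> e \<in> E \<Longrightarrow> \<exists>u w. e = {u,w} \<and> u \<noteq> w \<and> u \<in> V \<and> w \<in> V"
  unfolding sgraph_def by (metis card_2_iff insert_subset)

lemma nbrs_sym: "w \<in> nbrs E v \<longleftrightarrow> v \<in> nbrs E w"
  by (simp add: nbrs_def insert_commute)

lemma nbrs_sub: "sgraph V E \<Longrightarrow> nbrs E v \<subseteq> V"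
  unfolding nbrs_def sgraph_def by auto

lemma nbrs_fin: "sgraph V E \<Longrightarrow> finite (nbrs E v)"
  using nbrs_sub sg_finV finite_subset by metis

lemma nbrs_irrefl: "sgraph V E \<Longrightarrow> v \<notin> nbrs E v"
  unfolding nbrs_def sgraph_def by fastforce

lemma loop_not_edge: "sgraph V E \<Longrightarrow> {v,v} \<notin> E"
  unfolding sgraph_def by fastforce

lemma degree_nbrs: assumes "sgraph V E" shows "degree E v = card (nbrs E v)"
proof -
  have "bij_betw (\<lambda>w. {v,w}) (nbrs E v) {e\<in>E. v \<in> e}"
  proof (rule bij_betw_imageI)
    show "inj_on (\<lambda>w. {v,w}) (nbrs E v)"
      by (auto simp: inj_on_def doubleton_eq_iff)
    show "(\<lambda>w. {v,w}) ` nbrs E v = {e\<in>E. v \<in> e}"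
    proof
      show "(\<lambda>w. {v,w}) ` nbrs E v \<subseteq> {e\<in>E. v \<in> e}" by (auto simp: nbrs_def)
      show "{e\<in>E. v \<in> e} \<subseteq> (\<lambda>w. {v,w}) ` nbrs E v"
      proof
        fix e assume e: "e \<in> {e\<in>E. v \<in> e}"
        then obtain a b where ab: "e = {a,b}" "a \<noteq> b" using sg_edge[OF assms] by blast
        show "e \<in> (\<lambda>w. {v,w}) ` nbrs E v"
        proof (cases "v = a")
          case True thus ?thesis using e ab by (auto simp: nbrs_def image_iff)
        next
          case False hence "v = b" using e ab by auto
          thus ?thesis using e ab by (auto simp: nbrs_def image_iff insert_commute)
        qed
      qed
    qed
  qed
  thus ?thesis unfolding degree_def by (metis bij_betw_same_card)
qed

lemma handshake: assumes "sgraph V E" shows "(\<Sum>v\<in>V. degree E v) = 2 * card E"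
proof -
  have fV: "finite V" and fE: "finite E" using assms sg_finV sg_finE by auto
  have "(\<Sum>v\<in>V. degree E v) = (\<Sum>v\<in>V. \<Sum>e\<in>E. if v \<in> e then 1 else 0)"
    unfolding degree_def using fE by (simp add: sum.If_cases Int_def conj_commute)
  also have "\<dots> = (\<Sum>e\<in>E. \<Sum>v\<in>V. if v \<in> e then 1 else 0)" by (rule sum.swap)
  also have "\<dots> = (\<Sum>e\<in>E. card e)"
  proof (rule sum.cong[OF refl])
    fix e assume "e \<in> E"
    hence "e \<subseteq> V" using assms by (auto simp: sgraph_def)
    hence "V \<inter> e = e" by auto
    thus "(\<Sum>v\<in>V. if v \<in> e then 1 else 0) = card e" using fV by (simp add: sum.If_cases)
  qed
  also have "\<dots> = (\<Sum>e\<in>E. 2)" using assms by (auto simp: sgraph_def)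
  finally show ?thesis by simp
qed

lemma deg_le_maxdeg: "finite V \<Longrightarrow> v \<in> V \<Longrightarrow> degree E v \<le> maxdeg V E"
  unfolding maxdeg_def by (simp add: Max_ge)

lemma maxdeg_le: "finite V \<Longrightarrow> (\<And>v. v \<in> V \<Longrightarrow> degree E v \<le> b) \<Longrightarrow> maxdeg V E \<le> b"
  unfolding maxdeg_def by (auto simp: Max_le_iff)


locale pk =
  fixes VG :: "'b set" and EG :: "'b set set" and VT :: "'a set" and ET :: "'a set set"
    and I :: "'b set" and I' :: "'a set" and h' :: "'a \<Rightarrow> 'b" and k :: nat
    and D :: real and DT :: real and DG :: real
  assumes gG: "sgraph VG EG" and gT: "sgraph VT ET"
    and eG: "real (card EG) \<le> real k * real (card VG)"
    and cardT: "card VT \<le> card VG"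
    and ET_card: "card ET \<le> card VT"
    and degT: "\<And>v. v \<in> VT \<Longrightarrow> real (degree ET v) \<le> DT"
    and degG: "\<And>v. v \<in> VG \<Longrightarrow> real (degree EG v) \<le> DG"
    and I_sub: "I \<subseteq> VG" and I_card: "card I \<le> k" and I_deg: "\<And>v. v\<in>I \<Longrightarrow> real (degree EG v) \<le> D"
    and I'_sub: "I' \<subseteq> VT" and I'_card: "card I' = card I" and I'_deg: "\<And>v. v\<in>I' \<Longrightarrow> degree ET v \<le> 2"
    and pack: "packing I' (induced ET I') I (induced EG I) h'"
    and Dpos: "D > 0" and DTnn: "DT \<ge> 0" and DGnn: "DG \<ge> 0"
    and ineqA: "2*k*real (card VG)/D + k + 1 + D + DG + real (card VG)/10 + 2*DT*D < real (card VG)"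
    and ineqB: "3*k + 6*k*real (card VG)/D + 40*k*DT < (real (card VG) - 2*k*real (card VG)/D)/3"
begin

definition S where "S = {v\<in>VG. real (degree EG v) > D}"
definition Cap where "Cap = DG + real (card VG)/10"
definition conf where "conf f = {e\<in>ET. f ` e \<in> EG}"
definition Inv where "Inv f \<longleftrightarrow> inj_on f VT \<and> f ` VT \<subseteq> VG \<and> (\<forall>v\<in>I'. f v = h' v)
   \<and> (\<forall>e\<in>ET. \<not> f ` e \<subseteq> S) \<and> (\<forall>v\<in>I'. \<forall>w\<in>nbrs ET v. f w \<notin> S)
   \<and> (\<forall>x\<in>VT. real (card (\<Union>w\<in>{w\<in>nbrs ET x. f w \<in> S}. nbrs EG (f w))) \<le> Cap)"

lemma finVG: "finite VG" using gG sg_finV by blast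
lemma finVT: "finite VT" using gT sg_finV by blast
lemma finET: "finite ET" using gT sg_finE by blast

lemma S_sub: "S \<subseteq> VG" unfolding S_def by auto

lemma S_card: "real (card S) \<le> 2*k*real (card VG)/D"
proof -
  have "real (card S) * D = (\<Sum>v\<in>S. D)" by simp
  also have "\<dots> \<le> (\<Sum>v\<in>S. real (degree EG v))"
    by (rule sum_mono) (auto simp: S_def)
  also have "\<dots> \<le> (\<Sum>v\<in>VG. real (degree EG v))"
    by (rule sum_mono2[OF finVG S_sub]) auto
  also have "\<dots> = real (2 * card EG)"
    using handshake[OF gG] by (metis of_nat_sum)
  also have "\<dots> \<le> 2 * k * real (card VG)" using eG by simp
  finally show ?thesis using Dpos by (simp add: field_simps)
qed

lemma I_S: "I \<inter> S = {}" using I_deg unfolding S_def by force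

lemma h'_inj: "inj_on h' I'" and h'_img: "h' ` I' \<subseteq> I"
  using pack unfolding packing_def by auto

lemma h'_card: "card (h' ` I') \<le> k"
  using card_image[OF h'_inj] I'_card I_card by simp

lemma choose_x:
  assumes inv: "Inv f" and e0: "e0 \<in> conf f"
  shows "\<exists>x\<in>e0. x \<in> VT \<and> x \<notin> I' \<and> f x \<notin> S"
proof -
  from e0 have e0E: "e0 \<in> ET" and fe0: "f ` e0 \<in> EG" by (auto simp: conf_def)
  obtain u v where uv: "e0 = {u,v}" "u \<noteq> v" "u \<in> VT" "v \<in> VT" using sg_edge[OF gT e0E] by blast
  have inv1: "\<forall>v\<in>I'. f v = h' v" and inv2: "\<forall>e\<in>ET. \<not> f ` e \<subseteq> S"
    and inv3: "\<forall>v\<in>I'. \<forall>w\<in>nbrs ET v. f w \<notin> S"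
    using inv unfolding Inv_def by blast+
  have c1: "\<not> (u \<in> I' \<and> v \<in> I')"
  proof
    assume a: "u \<in> I' \<and> v \<in> I'"
    hence sub: "e0 \<subseteq> I'" using uv by simp
    hence ind: "e0 \<in> induced ET I'" using e0E by (simp add: induced_def)
    have eq: "h' ` e0 = f ` e0" using sub inv1 by (metis image_cong subsetD)
    have "h' ` e0 \<subseteq> I" using sub h'_img by blast
    hence "h' ` e0 \<in> induced EG I" using fe0 eq by (simp add: induced_def)
    moreover have "h' ` e0 \<in> (\<lambda>e. h' ` e) ` induced ET I'"
      using ind by (rule imageI)
    ultimately show False using pack unfolding packing_def by blast
  qed
  have vu: "v \<in> nbrs ET u" "u \<in> nbrs ET v" using e0E uv by (auto simp: nbrs_def insert_commute)
  have c2: "\<not> (f u \<in> S \<and> f v \<in> S)" using inv2 e0E uv by auto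
  have c3: "\<not> (u \<in> I' \<and> f v \<in> S)" using inv3 vu by blast
  have c4: "\<not> (v \<in> I' \<and> f u \<in> S)" using inv3 vu by blast
  from c1 c2 c3 c4 have "(u \<notin> I' \<and> f u \<notin> S) \<or> (v \<notin> I' \<and> f v \<notin> S)" by blast
  thus ?thesis using uv by auto
qed

lemma deg_nbrs_G: "v \<in> VG \<Longrightarrow> v \<notin> S \<Longrightarrow> real (card (nbrs EG v)) \<le> D"
  using degree_nbrs[OF gG] unfolding S_def by fastforce

lemma card_UN_real: "finite A \<Longrightarrow> real (card (\<Union>w\<in>A. F w)) \<le> (\<Sum>w\<in>A. real (card (F w)))"
proof -
  assume "finite A"
  hence "card (\<Union>w\<in>A. F w) \<le> (\<Sum>w\<in>A. card (F w))" by (rule card_UN_le)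
  hence "real (card (\<Union>w\<in>A. F w)) \<le> real (\<Sum>w\<in>A. card (F w))" by (simp only: of_nat_le_iff)
  thus ?thesis by (simp only: of_nat_sum)
qed

lemma bound_U5b:
  assumes "x \<in> VT" "f ` VT \<subseteq> VG"
  shows "real (card (\<Union>w\<in>{w\<in>nbrs ET x. f w \<notin> S}. nbrs EG (f w))) \<le> DT * D"
proof -
  let ?N = "{w\<in>nbrs ET x. f w \<notin> S}"
  have fN: "finite ?N" using nbrs_fin[OF gT] by auto
  have "real (card (\<Union>w\<in>?N. nbrs EG (f w))) \<le> (\<Sum>w\<in>?N. real (card (nbrs EG (f w))))"
    by (rule card_UN_real[OF fN])
  also have "\<dots> \<le> real (card ?N) * D"
  proof (rule sum_bounded_above)
    fix w assume "w \<in> ?N"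
    hence "w \<in> VT" "f w \<notin> S" using nbrs_sub[OF gT] by auto
    thus "real (card (nbrs EG (f w))) \<le> D" using deg_nbrs_G assms by blast
  qed
  also have "\<dots> \<le> DT * D"
  proof -
    have "card ?N \<le> card (nbrs ET x)" by (rule card_mono[OF nbrs_fin[OF gT]]) blast
    also have "\<dots> = degree ET x" using degree_nbrs[OF gT] by simp
    finally have "real (card ?N) \<le> DT" using degT[OF assms(1)] by linarith
    thus ?thesis using Dpos by (simp add: mult_right_mono)
  qed
  finally show ?thesis .
qed
lemma bound_U6:
  assumes "a \<in> VG" "a \<notin> S" "inj_on f VT" "f ` VT \<subseteq> VG"
  shows "real (card (f ` (\<Union>w\<in>{w\<in>VT. f w \<in> nbrs EG a}. nbrs ET w))) \<le> D * DT"
proof -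
  let ?W = "{w\<in>VT. f w \<in> nbrs EG a}"
  have fW: "finite ?W" using finVT by auto
  have cW: "card ?W \<le> card (nbrs EG a)"
    by (rule card_inj_on_le[OF _ _ nbrs_fin[OF gG]]) (use assms(3) in \<open>auto intro: inj_on_subset\<close>)
  have "card (f ` (\<Union>w\<in>?W. nbrs ET w)) \<le> card (\<Union>w\<in>?W. nbrs ET w)"
    by (rule card_image_le) (use fW nbrs_fin[OF gT] in blast)
  hence "real (card (f ` (\<Union>w\<in>?W. nbrs ET w))) \<le> real (card (\<Union>w\<in>?W. nbrs ET w))"
    by (simp only: of_nat_le_iff)
  also have "\<dots> \<le> (\<Sum>w\<in>?W. real (card (nbrs ET w)))" by (rule card_UN_real[OF fW])
  also have "\<dots> \<le> real (card ?W) * DT"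
  proof (rule sum_bounded_above)
    fix w assume "w \<in> ?W"
    thus "real (card (nbrs ET w)) \<le> DT" using degT degree_nbrs[OF gT] by auto
  qed
  also have "\<dots> \<le> D * DT"
  proof -
    have "real (card ?W) \<le> D" using cW deg_nbrs_G[OF assms(1,2)] by linarith
    thus ?thesis using DTnn by (simp add: mult_right_mono)
  qed
  finally show ?thesis .
qed


lemma swap_step:
  assumes inv: "Inv f" and ne: "conf f \<noteq> {}"
  shows "\<exists>f'. Inv f' \<and> card (conf f') < card (conf f)"
proof -
  obtain e0 where e0: "e0 \<in> conf f" using ne by blast
  obtain x where x: "x \<in> e0" "x \<in> VT" "x \<notin> I'" "f x \<notin> S" using choose_x[OF inv e0] by blast
  have inj: "inj_on f VT" and fV: "f ` VT \<subseteq> VG" and inv1: "\<forall>v\<in>I'. f v = h' v"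
    and inv2: "\<forall>e\<in>ET. \<not> f ` e \<subseteq> S" and inv3: "\<forall>v\<in>I'. \<forall>w\<in>nbrs ET v. f w \<notin> S"
    and inv4: "\<forall>x\<in>VT. real (card (\<Union>w\<in>{w\<in>nbrs ET x. f w \<in> S}. nbrs EG (f w))) \<le> Cap"
    using inv unfolding Inv_def by blast+
  define a where "a = f x"
  have aG: "a \<in> VG" using fV x by (auto simp: a_def)
  have aS: "a \<notin> S" using x by (simp add: a_def)
  define W where "W = {w\<in>VT. f w \<in> nbrs EG a}"
  define U5a where "U5a = (\<Union>w\<in>{w\<in>nbrs ET x. f w \<in> S}. nbrs EG (f w))"
  define U5b where "U5b = (\<Union>w\<in>{w\<in>nbrs ET x. f w \<notin> S}. nbrs EG (f w))"
  define U6 where "U6 = f ` (\<Union>w\<in>W. nbrs ET w)"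
  define B where "B = S \<union> h' ` I' \<union> {a} \<union> nbrs EG a \<union> U5a \<union> U5b \<union> U6"
  have U5: "(\<Union>w\<in>nbrs ET x. nbrs EG (f w)) = U5a \<union> U5b" unfolding U5a_def U5b_def by blast
  have c5a: "real (card U5a) \<le> Cap" using inv4 x unfolding U5a_def by blast
  have c5b: "real (card U5b) \<le> DT * D" unfolding U5b_def by (rule bound_U5b[OF x(2) fV])
  have c6: "real (card U6) \<le> D * DT" unfolding U6_def W_def by (rule bound_U6[OF aG aS inj fV])
  have c4: "real (card (nbrs EG a)) \<le> D" by (rule deg_nbrs_G[OF aG aS])
  have cS: "real (card S) \<le> 2*k*real (card VG)/D" by (rule S_card)
  have cI: "real (card (h' ` I')) \<le> k" using h'_card by simp
  have "card B \<le> card S + card (h' ` I') + card {a} + card (nbrs EG a) + card U5a + card U5b + card U6"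
    unfolding B_def by (meson card_Un_le add_le_mono le_refl order_trans)
  hence "real (card B) \<le> real (card S) + real (card (h' ` I')) + 1 + real (card (nbrs EG a)) + real (card U5a) + real (card U5b) + real (card U6)"
    by simp
  also have "\<dots> \<le> 2*k*real (card VG)/D + k + 1 + D + Cap + DT * D + D * DT"
    using c5a c5b c6 c4 cS cI by linarith
  also have "\<dots> < real (card VG)" using ineqA unfolding Cap_def by (simp add: algebra_simps)
  finally have cB: "card B < card VG" by simp
  have "\<not> VG \<subseteq> B"
  proof
    assume "VG \<subseteq> B"
    hence "card (VG \<inter> B) = card VG" by (simp add: Int_absorb2)
    moreover have "card (VG \<inter> B) \<le> card B"
    proof (rule card_mono)
      show "finite B" unfolding B_def U5a_def U5b_def U6_def W_def
        using finVG S_sub nbrs_fin[OF gT] nbrs_fin[OF gG] finite_subset finVT I'_sub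
        by (auto intro!: finite_UN_I finite_imageI simp: finite_subset[OF _ finVT])
    qed auto
    ultimately show False using cB by simp
  qed
  then obtain s where s: "s \<in> VG" "s \<notin> B" by blast
  have sS: "s \<notin> S" "s \<notin> h' ` I'" "s \<noteq> a" "s \<notin> nbrs EG a"
    "\<And>w. w \<in> nbrs ET x \<Longrightarrow> s \<notin> nbrs EG (f w)"
    "\<And>w z. w \<in> W \<Longrightarrow> z \<in> nbrs ET w \<Longrightarrow> f z \<noteq> s"
    using s U5 unfolding B_def U6_def by blast+
  define f' where "f' = (\<lambda>v. if v = x then s else if f v = s then a else f v)"
  have key1: "\<And>v. v \<in> VT \<Longrightarrow> f v \<in> S \<Longrightarrow> f' v = f v"
    unfolding f'_def using aS sS(1) a_def by auto
  have key2: "\<And>v. v \<in> VT \<Longrightarrow> f' v \<in> S \<longleftrightarrow> f v \<in> S"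
    unfolding f'_def using aS sS(1) a_def by auto
  have inj': "inj_on f' VT"
  proof (rule inj_onI)
    fix v1 v2 assume v: "v1 \<in> VT" "v2 \<in> VT" "f' v1 = f' v2"
    show "v1 = v2"
    proof (cases "v1 = x \<or> v2 = x \<or> f v1 = s \<or> f v2 = s")
      case True
      thus ?thesis using v inj x sS(3) unfolding f'_def a_def
        by (auto split: if_splits dest: inj_onD)
    next
      case False
      thus ?thesis using v inj unfolding f'_def by (auto dest: inj_onD)
    qed
  qed
  have fV': "f' ` VT \<subseteq> VG" using fV s aG unfolding f'_def by auto
  have I'1: "\<forall>v\<in>I'. f' v = h' v"
  proof
    fix v assume v: "v \<in> I'"
    have "v \<noteq> x" using x v by auto
    moreover have "f v \<noteq> s" using sS(2) v inv1 by (metis image_eqI)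
    ultimately show "f' v = h' v" using inv1 v unfolding f'_def by simp
  qed
  have inv2': "\<forall>e\<in>ET. \<not> f' ` e \<subseteq> S"
  proof (intro ballI notI)
    fix e assume e: "e \<in> ET" and sub: "f' ` e \<subseteq> S"
    have eV: "e \<subseteq> VT" using e gT by (auto simp: sgraph_def)
    have "f ` e \<subseteq> S" using sub eV key2 by blast
    thus False using inv2 e by blast
  qed
  have inv3': "\<forall>v\<in>I'. \<forall>w\<in>nbrs ET v. f' w \<notin> S"
    using inv3 key2 nbrs_sub[OF gT] by blast
  have inv4': "\<forall>y\<in>VT. real (card (\<Union>w\<in>{w\<in>nbrs ET y. f' w \<in> S}. nbrs EG (f' w))) \<le> Cap"
  proof
    fix y assume y: "y \<in> VT"
    have "{w\<in>nbrs ET y. f' w \<in> S} = {w\<in>nbrs ET y. f w \<in> S}"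
      using key2 nbrs_sub[OF gT] by blast
    moreover have "\<And>w. w \<in> {w\<in>nbrs ET y. f w \<in> S} \<Longrightarrow> f' w = f w"
      using key1 nbrs_sub[OF gT] by blast
    ultimately have "(\<Union>w\<in>{w\<in>nbrs ET y. f' w \<in> S}. nbrs EG (f' w)) = (\<Union>w\<in>{w\<in>nbrs ET y. f w \<in> S}. nbrs EG (f w))"
      by simp
    thus "real (card (\<Union>w\<in>{w\<in>nbrs ET y. f' w \<in> S}. nbrs EG (f' w))) \<le> Cap" using inv4 y by simp
  qed
  have Inv': "Inv f'" unfolding Inv_def using inj' fV' I'1 inv2' inv3' inv4' by blast
  have confsub: "conf f' \<subseteq> conf f - {e0}"
  proof
    fix e assume e: "e \<in> conf f'"
    hence eE: "e \<in> ET" and fe: "f' ` e \<in> EG" by (auto simp: conf_def)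
    obtain p q where pq: "e = {p,q}" "p \<noteq> q" "p \<in> VT" "q \<in> VT" using sg_edge[OF gT eE] by blast
    have nx: "\<And>w. {x,w} \<in> ET \<Longrightarrow> f' ` {x,w} \<notin> EG"
    proof -
      fix w assume w: "{x,w} \<in> ET"
      hence wn: "w \<in> nbrs ET x" by (simp add: nbrs_def)
      have wx: "w \<noteq> x" using w loop_not_edge[OF gT] by auto
      show "f' ` {x,w} \<notin> EG"
      proof (cases "f w = s")
        case True
        hence "f' ` {x,w} = {s,a}" using wx unfolding f'_def by auto
        thus ?thesis using sS(4) by (simp add: nbrs_def insert_commute)
      next
        case False
        hence "f' ` {x,w} = {s, f w}" using wx unfolding f'_def by auto
        moreover have "s \<notin> nbrs EG (f w)" using sS(5) wn by blast
        ultimately show ?thesis by (simp add: nbrs_def insert_commute)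
      qed
    qed
    have nz: "\<And>z w. {z,w} \<in> ET \<Longrightarrow> z \<in> VT \<Longrightarrow> w \<in> VT \<Longrightarrow> f z = s \<Longrightarrow> z \<noteq> x \<Longrightarrow> w \<noteq> x \<Longrightarrow> f' ` {z,w} \<notin> EG"
    proof -
      fix z w assume zw: "{z,w} \<in> ET" "z \<in> VT" "w \<in> VT" "f z = s" "z \<noteq> x" "w \<noteq> x"
      have wz: "w \<noteq> z" using zw(1) loop_not_edge[OF gT] by auto
      have fws: "f w \<noteq> s" using inj zw wz by (metis inj_onD)
      have "f' ` {z,w} = {a, f w}" using zw fws unfolding f'_def by auto
      moreover have "f w \<notin> nbrs EG a"
      proof
        assume "f w \<in> nbrs EG a"
        hence "w \<in> W" using zw by (simp add: W_def)
        moreover have "z \<in> nbrs ET w" using zw(1) by (simp add: nbrs_def insert_commute)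
        ultimately show False using sS(6) zw(4) by blast
      qed
      ultimately show "f' ` {z,w} \<notin> EG" by (simp add: nbrs_def)
    qed
    have px: "p \<noteq> x" "q \<noteq> x"
    proof -
      show "p \<noteq> x" using nx eE fe pq by blast
      show "q \<noteq> x" using nx eE fe pq by (metis insert_commute)
    qed
    have ps: "f p \<noteq> s" "f q \<noteq> s"
    proof -
      show "f p \<noteq> s" using nz eE fe pq px by blast
      show "f q \<noteq> s" using nz eE fe pq px by (metis insert_commute)
    qed
    have "f' ` e = f ` e" using px ps pq unfolding f'_def by auto
    hence "e \<in> conf f" using eE fe by (simp add: conf_def)
    moreover have "e \<noteq> e0" using x(1) px pq by auto
    ultimately show "e \<in> conf f - {e0}" by blast
  qed
  have "finite (conf f)" using finET by (simp add: conf_def)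
  hence "card (conf f') < card (conf f)"
    using confsub e0 by (meson card_Diff1_less card_mono finite_Diff order_le_less_trans)
  thus ?thesis using Inv' by blast
qed


definition C where "C = {p\<in>VT. degree ET p \<le> 2 \<and> p \<notin> I' \<and> (\<forall>v\<in>I'. p \<notin> nbrs ET v)}"
definition load where "load g Q x = (\<Sum>h\<in>Q. if g h \<in> nbrs ET x then real (degree EG h) else 0)"
definition Valid where "Valid Q g \<longleftrightarrow> Q \<subseteq> S \<and> inj_on g Q \<and> g ` Q \<subseteq> C
   \<and> (\<forall>h1\<in>Q. \<forall>h2\<in>Q. {g h1, g h2} \<notin> ET) \<and> (\<forall>x\<in>VT. load g Q x \<le> Cap)"

lemma card_low: "real (card VT) / 3 \<le> real (card {p\<in>VT. degree ET p \<le> 2})"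
proof -
  let ?L = "{p\<in>VT. degree ET p \<le> 2}" and ?H = "{p\<in>VT. \<not> degree ET p \<le> 2}"
  have "3 * card ?H = (\<Sum>p\<in>?H. 3)" by simp
  also have "\<dots> \<le> (\<Sum>p\<in>?H. degree ET p)" by (rule sum_mono) auto
  also have "\<dots> \<le> (\<Sum>p\<in>VT. degree ET p)" by (rule sum_mono2[OF finVT]) auto
  also have "\<dots> = 2 * card ET" by (rule handshake[OF gT])
  also have "\<dots> \<le> 2 * card VT" using ET_card by simp
  finally have h: "3 * card ?H \<le> 2 * card VT" .
  have u: "?L \<union> ?H = VT" by blast
  have "card (?L \<union> ?H) = card ?L + card ?H"
    by (rule card_Un_disjoint) (use finVT in auto)
  hence "card VT = card ?L + card ?H" using u by simp
  thus ?thesis using h by linarith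
qed

lemma card_C: "real (card VT) / 3 - 3 * k \<le> real (card C)"
proof -
  let ?L = "{p\<in>VT. degree ET p \<le> 2}"
  let ?X = "I' \<union> (\<Union>v\<in>I'. nbrs ET v)"
  have finI': "finite I'" using I'_sub finVT finite_subset by blast
  have sub: "?L \<subseteq> C \<union> ?X" unfolding C_def by blast
  have "card ?L \<le> card (C \<union> ?X)" by (rule card_mono) (use sub finVT finI' nbrs_fin[OF gT] C_def in auto)
  also have "\<dots> \<le> card C + card ?X" by (rule card_Un_le)
  also have "card ?X \<le> card I' + card (\<Union>v\<in>I'. nbrs ET v)" by (rule card_Un_le)
  also have "card (\<Union>v\<in>I'. nbrs ET v) \<le> (\<Sum>v\<in>I'. card (nbrs ET v))" by (rule card_UN_le[OF finI'])
  also have "\<dots> \<le> (\<Sum>v\<in>I'. 2)" by (rule sum_mono) (use I'_deg degree_nbrs[OF gT] in auto)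
  finally have "card ?L \<le> card C + card I' + 2 * card I'" by simp
  hence "real (card ?L) \<le> real (card C) + 3 * k" using I'_card I_card by simp
  thus ?thesis using card_low by linarith
qed

lemma sum_deg_Q: "Q \<subseteq> VG \<Longrightarrow> (\<Sum>h\<in>Q. real (degree EG h)) \<le> 2 * k * real (card VG)"
proof -
  assume Q: "Q \<subseteq> VG"
  have "(\<Sum>h\<in>Q. real (degree EG h)) \<le> (\<Sum>v\<in>VG. real (degree EG v))"
    by (rule sum_mono2[OF finVG Q]) auto
  also have "\<dots> = real (2 * card EG)"
    using handshake[OF gG] by (simp only: of_nat_sum[symmetric])
  also have "\<dots> \<le> 2 * k * real (card VG)" using eG by simp
  finally show ?thesis .
qed

lemma total_load:
  assumes V: "Valid Q g"
  shows "(\<Sum>x\<in>VT. load g Q x) \<le> 4 * k * real (card VG)"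
proof -
  have QS: "Q \<subseteq> S" and gC: "g ` Q \<subseteq> C" using V by (auto simp: Valid_def)
  have finQ: "finite Q" by (rule finite_subset[OF QS finite_subset[OF S_sub finVG]])
  have "(\<Sum>x\<in>VT. load g Q x) = (\<Sum>h\<in>Q. \<Sum>x\<in>VT. if g h \<in> nbrs ET x then real (degree EG h) else 0)"
    unfolding load_def by (rule sum.swap)
  also have "\<dots> = (\<Sum>h\<in>Q. real (degree EG h) * real (card (nbrs ET (g h))))"
  proof (rule sum.cong[OF refl])
    fix h assume h: "h \<in> Q"
    have "{x\<in>VT. g h \<in> nbrs ET x} = nbrs ET (g h)"
    proof (intro equalityI subsetI)
      fix x assume "x \<in> {x\<in>VT. g h \<in> nbrs ET x}"
      thus "x \<in> nbrs ET (g h)" using nbrs_sym[of "g h" ET x] by blast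
    next
      fix x assume x: "x \<in> nbrs ET (g h)"
      hence "x \<in> VT" using nbrs_sub[OF gT] by blast
      thus "x \<in> {x\<in>VT. g h \<in> nbrs ET x}" using x nbrs_sym[of "g h" ET x] by blast
    qed
    have "(\<Sum>x\<in>VT. if g h \<in> nbrs ET x then real (degree EG h) else 0) = (\<Sum>x\<in>{x\<in>VT. g h \<in> nbrs ET x}. real (degree EG h))"
      by (rule sum.inter_filter[symmetric, OF finVT])
    also have "\<dots> = real (card {x\<in>VT. g h \<in> nbrs ET x}) * real (degree EG h)" by simp
    finally show "(\<Sum>x\<in>VT. if g h \<in> nbrs ET x then real (degree EG h) else 0) = real (degree EG h) * real (card (nbrs ET (g h)))"
      using \<open>{x\<in>VT. g h \<in> nbrs ET x} = nbrs ET (g h)\<close> by (simp add: mult.commute)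
  qed
  also have "\<dots> \<le> (\<Sum>h\<in>Q. real (degree EG h) * 2)"
  proof (rule sum_mono)
    fix h assume h: "h \<in> Q"
    hence "g h \<in> C" using gC by blast
    hence "card (nbrs ET (g h)) \<le> 2" unfolding C_def using degree_nbrs[OF gT] by simp
    thus "real (degree EG h) * real (card (nbrs ET (g h))) \<le> real (degree EG h) * 2"
      by (simp add: mult_left_mono)
  qed
  also have "\<dots> = 2 * (\<Sum>h\<in>Q. real (degree EG h))" by (simp add: sum_distrib_left mult.commute)
  also have "\<dots> \<le> 2 * (2 * k * real (card VG))"
  proof -
    have "(\<Sum>h\<in>Q. real (degree EG h)) \<le> 2 * k * real (card VG)" using sum_deg_Q[of Q] QS S_sub by (meson order_trans)
    thus ?thesis by linarith
  qed
  finally show ?thesis by simp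
qed

lemma n_pos: "real (card VG) > 0"
  using ineqA Dpos DTnn DGnn by (smt (verit) divide_nonneg_pos mult_nonneg_nonneg of_nat_0_le_iff)

lemma load_nn: "0 \<le> load g Q x"
  unfolding load_def by (rule sum_nonneg) auto

lemma heavy_card:
  assumes V: "Valid Q g"
  shows "real (card {x\<in>VT. load g Q x > real (card VG)/10}) \<le> 40 * k"
proof -
  let ?H = "{x\<in>VT. load g Q x > real (card VG)/10}"
  have "real (card ?H) * (real (card VG)/10) = (\<Sum>x\<in>?H. real (card VG)/10)" by simp
  also have "\<dots> \<le> (\<Sum>x\<in>?H. load g Q x)" by (rule sum_mono) auto
  also have "\<dots> \<le> (\<Sum>x\<in>VT. load g Q x)" by (rule sum_mono2[OF finVT]) (auto simp: load_nn)
  also have "\<dots> \<le> 4 * k * real (card VG)" by (rule total_load[OF V])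
  finally have "real (card ?H) * real (card VG) \<le> (40 * k) * real (card VG)" by simp
  thus ?thesis using n_pos by simp
qed

lemma step:
  assumes V: "Valid Q g" and lt: "card Q < card S" and big: "card VG < card VT + card S"
  shows "\<exists>h p. h \<notin> Q \<and> Valid (insert h Q) (g(h:=p))"
proof -
  have QS: "Q \<subseteq> S" and inj: "inj_on g Q" and gC: "g ` Q \<subseteq> C"
    and ind: "\<forall>h1\<in>Q. \<forall>h2\<in>Q. {g h1, g h2} \<notin> ET" and ld: "\<forall>x\<in>VT. load g Q x \<le> Cap"
    using V unfolding Valid_def by blast+
  have finS: "finite S" by (rule finite_subset[OF S_sub finVG])
  have finQ: "finite Q" by (rule finite_subset[OF QS finS])
  have "\<not> S \<subseteq> Q"
  proof
    assume "S \<subseteq> Q" hence "card S \<le> card Q" by (rule card_mono[OF finQ])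
    thus False using lt by simp
  qed
  then obtain h where h: "h \<in> S" "h \<notin> Q" by blast
  define Hv where "Hv = {x\<in>VT. load g Q x > real (card VG)/10}"
  define Bl where "Bl = g ` Q \<union> (\<Union>q\<in>Q. nbrs ET (g q)) \<union> (\<Union>x\<in>Hv. nbrs ET x)"
  have finHv: "finite Hv" unfolding Hv_def using finVT by simp
  have cHv: "real (card Hv) \<le> 40 * k" unfolding Hv_def by (rule heavy_card[OF V])
  have b1: "real (card (g ` Q)) \<le> real (card Q)" by (simp add: card_image_le[OF finQ])
  have b2: "real (card (\<Union>q\<in>Q. nbrs ET (g q))) \<le> 2 * real (card Q)"
  proof -
    have "real (card (\<Union>q\<in>Q. nbrs ET (g q))) \<le> (\<Sum>q\<in>Q. real (card (nbrs ET (g q))))"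
      by (rule card_UN_real[OF finQ])
    also have "\<dots> \<le> real (card Q) * 2"
    proof (rule sum_bounded_above)
      fix q assume "q \<in> Q"
      hence "g q \<in> C" using gC by blast
      thus "real (card (nbrs ET (g q))) \<le> 2" unfolding C_def using degree_nbrs[OF gT] by simp
    qed
    finally show ?thesis by simp
  qed
  have b3: "real (card (\<Union>x\<in>Hv. nbrs ET x)) \<le> 40 * k * DT"
  proof -
    have "real (card (\<Union>x\<in>Hv. nbrs ET x)) \<le> (\<Sum>x\<in>Hv. real (card (nbrs ET x)))"
      by (rule card_UN_real[OF finHv])
    also have "\<dots> \<le> real (card Hv) * DT"
    proof (rule sum_bounded_above)
      fix x assume "x \<in> Hv"
      hence "x \<in> VT" unfolding Hv_def by blast
      thus "real (card (nbrs ET x)) \<le> DT" using degT degree_nbrs[OF gT] by simp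
    qed
    also have "\<dots> \<le> 40 * k * DT" using cHv DTnn by (simp add: mult_right_mono)
    finally show ?thesis .
  qed
  have "card Bl \<le> card (g ` Q) + card (\<Union>q\<in>Q. nbrs ET (g q)) + card (\<Union>x\<in>Hv. nbrs ET x)"
    unfolding Bl_def by (meson card_Un_le add_le_mono le_refl order_trans)
  hence "real (card Bl) \<le> real (card (g ` Q)) + real (card (\<Union>q\<in>Q. nbrs ET (g q))) + real (card (\<Union>x\<in>Hv. nbrs ET x))"
    by simp
  hence cBl: "real (card Bl) \<le> 3 * real (card Q) + 40 * k * DT" using b1 b2 b3 by linarith
  have cQ: "real (card Q) \<le> 2*k*real (card VG)/D" using lt S_card by linarith
  have cVT: "real (card VT) \<ge> real (card VG) - 2*k*real (card VG)/D" using big S_card by linarith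
  define X where "X = real k * real (card VG) / D"
  have e1: "real (2*k) * real (card VG) / D = 2 * X" "real (6*k) * real (card VG) / D = 6 * X"
    "2 * real k * real (card VG) / D = 2 * X"
    unfolding X_def by simp_all
  have s1: "real (card Bl) \<le> 6*X + real (40*k)*DT" using cBl cQ unfolding e1 by linarith
  have s2: "(real (card VG) - 2*X)/3 \<le> real (card VT)/3" using cVT unfolding e1 by simp
  have s3: "real (3 * k) + 6 * X + real (40 * k) * DT < (real (card VG) - 2 * X) / 3" using ineqB unfolding e1 .
  have s4: "real (card VT) / 3 - real (3 * k) \<le> real (card C)" by (rule card_C)
  have "real (card Bl) < real (card C)"
    using s1 s2 s3 s4 by linarith
  hence "\<not> C \<subseteq> Bl"
  proof (intro notI)
    assume "real (card Bl) < real (card C)" "C \<subseteq> Bl"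
    moreover have "finite Bl" unfolding Bl_def using finQ finHv nbrs_fin[OF gT] by blast
    ultimately show False using card_mono by (metis not_le of_nat_le_iff)
  qed
  then obtain p where p: "p \<in> C" "p \<notin> Bl" by blast
  define g' where "g' = g(h:=p)"
  have g'Q: "\<And>q. q \<in> Q \<Longrightarrow> g' q = g q" unfolding g'_def using h by auto
  have pnot: "p \<notin> g ` Q" "\<And>q. q \<in> Q \<Longrightarrow> p \<notin> nbrs ET (g q)" "\<And>x. x \<in> Hv \<Longrightarrow> p \<notin> nbrs ET x"
    using p(2) unfolding Bl_def by blast+
  have v1: "insert h Q \<subseteq> S" using QS h by blast
  have v2: "inj_on g' (insert h Q)"
  proof -
    have "inj_on g' Q" using inj g'Q by (metis inj_on_cong)
    moreover have "g' h \<notin> g' ` (Q - {h})" using pnot(1) g'Q unfolding g'_def by auto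
    ultimately show ?thesis by simp
  qed
  have v3: "g' ` insert h Q \<subseteq> C" using gC p(1) g'Q unfolding g'_def by auto
  have v4: "\<forall>h1\<in>insert h Q. \<forall>h2\<in>insert h Q. {g' h1, g' h2} \<notin> ET"
  proof (intro ballI)
    fix h1 h2 assume a: "h1 \<in> insert h Q" "h2 \<in> insert h Q"
    show "{g' h1, g' h2} \<notin> ET"
    proof (cases "h1 = h")
      case T1: True
      show ?thesis
      proof (cases "h2 = h")
        case True thus ?thesis using T1 loop_not_edge[OF gT] by simp
      next
        case False hence "h2 \<in> Q" using a by simp
        hence "g' h1 = p" "g' h2 = g h2" "p \<notin> nbrs ET (g h2)" using T1 g'Q pnot(2) unfolding g'_def by auto
        thus ?thesis by (simp add: nbrs_def insert_commute)
      qed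
    next
      case F1: False
      hence h1Q: "h1 \<in> Q" using a by simp
      show ?thesis
      proof (cases "h2 = h")
        case True
        hence "g' h2 = p" "g' h1 = g h1" "p \<notin> nbrs ET (g h1)" using h1Q g'Q pnot(2) unfolding g'_def by auto
        thus ?thesis by (simp add: nbrs_def)
      next
        case False hence "h2 \<in> Q" using a by simp
        thus ?thesis using h1Q ind g'Q by simp
      qed
    qed
  qed
  have v5: "\<forall>x\<in>VT. load g' (insert h Q) x \<le> Cap"
  proof
    fix x assume x: "x \<in> VT"
    have "load g' (insert h Q) x = (if p \<in> nbrs ET x then real (degree EG h) else 0) + load g' Q x"
      unfolding load_def using finQ h(2) by (simp add: g'_def)
    also have "load g' Q x = load g Q x" unfolding load_def using g'Q by (intro sum.cong) auto
    finally have eq: "load g' (insert h Q) x = (if p \<in> nbrs ET x then real (degree EG h) else 0) + load g Q x" .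
    show "load g' (insert h Q) x \<le> Cap"
    proof (cases "p \<in> nbrs ET x")
      case True
      hence "x \<notin> Hv" using pnot(3) by blast
      hence "load g Q x \<le> real (card VG)/10" using x unfolding Hv_def by simp
      moreover have "real (degree EG h) \<le> DG" using degG h(1) S_sub by blast
      ultimately show ?thesis using eq True unfolding Cap_def by simp
    next
      case False thus ?thesis using eq ld x by simp
    qed
  qed
  have "Valid (insert h Q) g'" unfolding Valid_def using v1 v2 v3 v4 v5 by blast
  thus ?thesis using h(2) unfolding g'_def by blast
qed

lemma place: "j \<le> card VT + card S - card VG \<Longrightarrow> \<exists>Q g. Valid Q g \<and> card Q = j"
proof (induction j)
  case 0
  have "Valid {} g" for g :: "'b \<Rightarrow> 'a"
    unfolding Valid_def load_def Cap_def using DGnn by simp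
  thus ?case by (intro exI[of _ "{}"]) auto
next
  case (Suc j)
  then obtain Q g where Qg: "Valid Q g" "card Q = j" by auto
  have finQ: "finite Q" using Qg(1) finite_subset[OF S_sub finVG] finite_subset unfolding Valid_def by blast
  have "card Q < card S" using Suc.prems Qg(2) cardT by linarith
  moreover have "card VG < card VT + card S" using Suc.prems by linarith
  ultimately obtain h p where "h \<notin> Q" "Valid (insert h Q) (g(h:=p))" using step[OF Qg(1)] by blast
  moreover have "card (insert h Q) = Suc j" using \<open>h \<notin> Q\<close> finQ Qg(2) by simp
  ultimately show ?case by blast
qed


lemma exists_Inv: "\<exists>f. Inv f"
proof -
  define r where "r = card VT + card S - card VG"
  obtain Q g where V: "Valid Q g" and cQ: "card Q = r" using place[of r] by (auto simp: r_def)
  have QS: "Q \<subseteq> S" and inj: "inj_on g Q" and gC: "g ` Q \<subseteq> C"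
    and ind: "\<forall>h1\<in>Q. \<forall>h2\<in>Q. {g h1, g h2} \<notin> ET" and ld: "\<forall>x\<in>VT. load g Q x \<le> Cap"
    using V unfolding Valid_def by blast+
  have finS: "finite S" by (rule finite_subset[OF S_sub finVG])
  have finQ: "finite Q" by (rule finite_subset[OF QS finS])
  have finI': "finite I'" by (rule finite_subset[OF I'_sub finVT])
  define P where "P = g ` Q"
  have PVT: "P \<subseteq> VT" and PI': "P \<inter> I' = {}" using gC unfolding P_def C_def by auto
  have cP: "card P = r" using card_image[OF inj] cQ unfolding P_def by simp
  define R where "R = VT - I' - P"
  define Tg where "Tg = VG - S - h' ` I'"
  have hI'S: "h' ` I' \<inter> S = {}" using h'_img I_S by blast
  have hI'VG: "h' ` I' \<subseteq> VG" using h'_img I_sub by blast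
  have chI: "card (h' ` I') = card I'" by (rule card_image[OF h'_inj])
  have cR: "card R = card VT - (card I' + card P)"
  proof -
    have "card (I' \<union> P) = card I' + card P"
      by (rule card_Un_disjoint) (use finI' PVT finVT PI' finite_subset in auto)
    moreover have "R = VT - (I' \<union> P)" unfolding R_def by blast
    moreover have "I' \<union> P \<subseteq> VT" using I'_sub PVT by blast
    ultimately show ?thesis by (simp add: card_Diff_subset finite_subset[OF _ finVT])
  qed
  have cIPle: "card I' + card P \<le> card VT"
  proof -
    have "card (I' \<union> P) = card I' + card P"
      by (rule card_Un_disjoint) (use finI' PVT finVT PI' finite_subset in auto)
    moreover have "card (I' \<union> P) \<le> card VT" by (rule card_mono[OF finVT]) (use I'_sub PVT in blast)
    ultimately show ?thesis by simp
  qed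
  have cTg: "card Tg = card VG - (card S + card I')"
  proof -
    have "card (S \<union> h' ` I') = card S + card I'"
      using card_Un_disjoint[OF finS finite_imageI[OF finI'] ] hI'S chI by (simp add: Int_commute)
    moreover have "Tg = VG - (S \<union> h' ` I')" unfolding Tg_def by blast
    moreover have "S \<union> h' ` I' \<subseteq> VG" using S_sub hI'VG by blast
    ultimately show ?thesis by (simp add: card_Diff_subset finite_subset[OF _ finVG])
  qed
  have cSIle: "card S + card I' \<le> card VG"
  proof -
    have "card (S \<union> h' ` I') = card S + card I'"
      using card_Un_disjoint[OF finS finite_imageI[OF finI'] ] hI'S chI by (simp add: Int_commute)
    moreover have "card (S \<union> h' ` I') \<le> card VG" by (rule card_mono[OF finVG]) (use S_sub hI'VG in blast)
    ultimately show ?thesis by simp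
  qed
  have "card R \<le> card Tg" using cR cTg cP cIPle cSIle cardT unfolding r_def by linarith
  then obtain \<phi> where phi: "\<phi> ` R \<subseteq> Tg" "inj_on \<phi> R"
    using card_le_inj[of R Tg] finVT finVG unfolding R_def Tg_def by auto
  define f where "f = (\<lambda>v. if v \<in> I' then h' v else if v \<in> P then inv_into Q g v else \<phi> v)"
  have fI': "\<And>v. v \<in> I' \<Longrightarrow> f v = h' v" unfolding f_def by simp
  have fP: "\<And>v. v \<in> P \<Longrightarrow> f v = inv_into Q g v" unfolding f_def using PI' by auto
  have fR: "\<And>v. v \<in> R \<Longrightarrow> f v = \<phi> v" unfolding f_def R_def by auto
  have fPQ: "\<And>v. v \<in> P \<Longrightarrow> f v \<in> Q" using fP inv_into_into unfolding P_def by metis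
  have fgh: "\<And>h. h \<in> Q \<Longrightarrow> f (g h) = h" using fP inv_into_f_f[OF inj] unfolding P_def by auto
  have VTsplit: "\<And>v. v \<in> VT \<Longrightarrow> v \<in> I' \<or> v \<in> P \<or> v \<in> R" unfolding R_def by blast
  have rngI': "\<And>v. v \<in> I' \<Longrightarrow> f v \<in> h' ` I'" using fI' by simp
  have rngR: "\<And>v. v \<in> R \<Longrightarrow> f v \<in> Tg" using fR phi by blast
  have fS: "\<And>w. w \<in> VT \<Longrightarrow> f w \<in> S \<longleftrightarrow> w \<in> P"
  proof -
    fix w assume w: "w \<in> VT"
    show "f w \<in> S \<longleftrightarrow> w \<in> P"
      using VTsplit[OF w] rngI' rngR fPQ QS hI'S unfolding Tg_def R_def by blast
  qed
  have inj_f: "inj_on f VT"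
  proof (rule inj_onI)
    fix v1 v2 assume v: "v1 \<in> VT" "v2 \<in> VT" "f v1 = f v2"
    have injP: "inj_on (inv_into Q g) P" unfolding P_def by (rule inj_on_inv_into) simp
    have disj: "h' ` I' \<inter> Tg = {}" "S \<inter> Tg = {}" unfolding Tg_def by auto
    show "v1 = v2"
      using VTsplit[OF v(1)] VTsplit[OF v(2)]
    proof (elim disjE)
      assume "v1 \<in> I'" "v2 \<in> I'" thus ?thesis using v fI' h'_inj by (metis inj_onD)
    next
      assume "v1 \<in> P" "v2 \<in> P" thus ?thesis using v fP injP by (metis inj_onD)
    next
      assume "v1 \<in> R" "v2 \<in> R" thus ?thesis using v fR phi(2) by (metis inj_onD)
    next
      assume "v1 \<in> I'" "v2 \<in> P" thus ?thesis using v rngI' fPQ QS hI'S by (metis disjoint_iff subsetD)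
    next
      assume "v1 \<in> P" "v2 \<in> I'" thus ?thesis using v rngI' fPQ QS hI'S by (metis disjoint_iff subsetD)
    next
      assume "v1 \<in> I'" "v2 \<in> R" thus ?thesis using v rngI' rngR disj by (metis disjoint_iff)
    next
      assume "v1 \<in> R" "v2 \<in> I'" thus ?thesis using v rngI' rngR disj by (metis disjoint_iff)
    next
      assume "v1 \<in> P" "v2 \<in> R" thus ?thesis using v fPQ QS rngR disj by (metis disjoint_iff subsetD)
    next
      assume "v1 \<in> R" "v2 \<in> P" thus ?thesis using v fPQ QS rngR disj by (metis disjoint_iff subsetD)
    qed
  qed
  have fV: "f ` VT \<subseteq> VG"
  proof
    fix y assume "y \<in> f ` VT"
    then obtain v where v: "v \<in> VT" "y = f v" by blast
    show "y \<in> VG" using VTsplit[OF v(1)] rngI' rngR fPQ QS S_sub hI'VG v(2) unfolding Tg_def by blast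
  qed
  have i2: "\<forall>e\<in>ET. \<not> f ` e \<subseteq> S"
  proof (intro ballI notI)
    fix e assume e: "e \<in> ET" and sub: "f ` e \<subseteq> S"
    obtain u v where uv: "e = {u,v}" "u \<noteq> v" "u \<in> VT" "v \<in> VT" using sg_edge[OF gT e] by blast
    have "u \<in> P" "v \<in> P" using sub uv fS by auto
    then obtain h1 h2 where "h1 \<in> Q" "h2 \<in> Q" "u = g h1" "v = g h2" unfolding P_def by blast
    thus False using ind e uv by blast
  qed
  have i3: "\<forall>v\<in>I'. \<forall>w\<in>nbrs ET v. f w \<notin> S"
  proof (intro ballI notI)
    fix v w assume v: "v \<in> I'" and w: "w \<in> nbrs ET v" and fw: "f w \<in> S"
    have "w \<in> VT" using w nbrs_sub[OF gT] by blast
    hence "w \<in> P" using fS fw by blast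
    hence "w \<in> C" using gC unfolding P_def by blast
    thus False using v w unfolding C_def by blast
  qed
  have i4: "\<forall>x\<in>VT. real (card (\<Union>w\<in>{w\<in>nbrs ET x. f w \<in> S}. nbrs EG (f w))) \<le> Cap"
  proof
    fix x assume x: "x \<in> VT"
    define Q1 where "Q1 = {h\<in>Q. g h \<in> nbrs ET x}"
    have finQ1: "finite Q1" unfolding Q1_def using finQ by simp
    have fSx: "\<And>w. w \<in> nbrs ET x \<Longrightarrow> f w \<in> S \<longleftrightarrow> w \<in> P"
    proof -
      fix w assume "w \<in> nbrs ET x"
      hence "w \<in> VT" using nbrs_sub[OF gT] by blast
      thus "f w \<in> S \<longleftrightarrow> w \<in> P" by (rule fS)
    qed
    have eq0: "{w\<in>nbrs ET x. f w \<in> S} = {w\<in>nbrs ET x. w \<in> P}"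
      using fSx by auto
    have eq1: "{w\<in>nbrs ET x. w \<in> P} = g ` Q1" unfolding Q1_def P_def by auto
    have eq: "{w\<in>nbrs ET x. f w \<in> S} = g ` Q1" using eq0 eq1 by simp
    have injQ1: "inj_on g Q1" by (rule inj_on_subset[OF inj]) (auto simp: Q1_def)
    have "real (card (\<Union>w\<in>g ` Q1. nbrs EG (f w))) \<le> (\<Sum>w\<in>g ` Q1. real (card (nbrs EG (f w))))"
      by (rule card_UN_real) (use finQ1 in simp)
    also have "\<dots> = (\<Sum>h\<in>Q1. real (card (nbrs EG (f (g h)))))"
      using sum.reindex[OF injQ1, of "\<lambda>w. real (card (nbrs EG (f w)))"] by simp
    also have "\<dots> = (\<Sum>h\<in>Q1. real (degree EG h))"
    proof (rule sum.cong[OF refl])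
      fix h assume "h \<in> Q1"
      hence "h \<in> Q" unfolding Q1_def by blast
      hence "f (g h) = h" by (rule fgh)
      thus "real (card (nbrs EG (f (g h)))) = real (degree EG h)" using degree_nbrs[OF gG, of h] by simp
    qed
    also have "\<dots> = load g Q x" unfolding load_def Q1_def by (rule sum.inter_filter[OF finQ])
    also have "\<dots> \<le> Cap" using ld x by blast
    finally show "real (card (\<Union>w\<in>{w\<in>nbrs ET x. f w \<in> S}. nbrs EG (f w))) \<le> Cap" unfolding eq .
  qed
  have "Inv f" unfolding Inv_def using inj_f fV fI' i2 i3 i4 by blast
  thus ?thesis by blast
qed


lemma exists_packing: "\<exists>f. packing VT ET VG EG f \<and> (\<forall>v\<in>I'. f v = h' v)"
proof -
  obtain f0 where "Inv f0" using exists_Inv by blast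
  then obtain f where f: "Inv f" and minf: "\<forall>y. Inv y \<longrightarrow> card (conf f) \<le> card (conf y)"
    using ex_has_least_nat[of Inv f0 "\<lambda>f. card (conf f)"] by blast
  have "conf f = {}"
  proof (rule ccontr)
    assume "conf f \<noteq> {}"
    then obtain f' where "Inv f'" "card (conf f') < card (conf f)" using swap_step[OF f] by blast
    thus False using minf by (meson not_le)
  qed
  hence "(\<lambda>e. f ` e) ` ET \<inter> EG = {}" unfolding conf_def by blast
  moreover have "inj_on f VT" "f ` VT \<subseteq> VG" "\<forall>v\<in>I'. f v = h' v" using f unfolding Inv_def by blast+
  ultimately show ?thesis unfolding packing_def by blast
qed

end

lemma deg_union:
  assumes gT: "sgraph VT ET" and gG: "sgraph VG EG" and inj: "inj_on f VT" and fV: "f ` VT \<subseteq> VG"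
  shows "maxdeg VG ((\<lambda>e. f ` e) ` ET \<union> EG) \<le> maxdeg VT ET + maxdeg VG EG"
proof (rule maxdeg_le[OF sg_finV[OF gG]])
  fix v assume v: "v \<in> VG"
  let ?A = "(\<lambda>e. f ` e) ` ET"
  have eqU: "{e\<in>?A \<union> EG. v \<in> e} = {e\<in>?A. v \<in> e} \<union> {e\<in>EG. v \<in> e}" by blast
  have "card {e\<in>?A \<union> EG. v \<in> e} \<le> card {e\<in>?A. v \<in> e} + card {e\<in>EG. v \<in> e}"
    unfolding eqU by (rule card_Un_le)
  hence "degree (?A \<union> EG) v \<le> card {e\<in>?A. v \<in> e} + degree EG v"
    unfolding degree_def .
  moreover have "card {e\<in>?A. v \<in> e} \<le> maxdeg VT ET"
  proof (cases "v \<in> f ` VT")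
    case True
    then obtain x where x: "x \<in> VT" "v = f x" by blast
    have "{e\<in>?A. v \<in> e} \<subseteq> (\<lambda>e. f ` e) ` {e\<in>ET. x \<in> e}"
    proof
      fix e' assume "e' \<in> {e\<in>?A. v \<in> e}"
      then obtain e where e: "e \<in> ET" "e' = f ` e" "v \<in> f ` e" by blast
      then obtain y where y: "y \<in> e" "f y = f x" using x by blast
      have "e \<subseteq> VT" using e gT by (auto simp: sgraph_def)
      hence "y = x" using y x by (intro inj_onD[OF inj y(2)]) blast+
      thus "e' \<in> (\<lambda>e. f ` e) ` {e\<in>ET. x \<in> e}" using e y by blast
    qed
    hence "card {e\<in>?A. v \<in> e} \<le> card ((\<lambda>e. f ` e) ` {e\<in>ET. x \<in> e})"
      by (rule card_mono[rotated]) (use sg_finE[OF gT] in simp)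
    also have "\<dots> \<le> card {e\<in>ET. x \<in> e}" by (rule card_image_le) (use sg_finE[OF gT] in simp)
    also have "\<dots> = degree ET x" by (simp add: degree_def)
    also have "\<dots> \<le> maxdeg VT ET" by (rule deg_le_maxdeg[OF sg_finV[OF gT] x(1)])
    finally show ?thesis .
  next
    case False
    have "{e\<in>?A. v \<in> e} = {}"
    proof (rule ccontr)
      assume "{e\<in>?A. v \<in> e} \<noteq> {}"
      then obtain e where e: "e \<in> ET" "v \<in> f ` e" by blast
      have "e \<subseteq> VT" using e gT by (auto simp: sgraph_def)
      thus False using e False by blast
    qed
    thus ?thesis unfolding \<open>{e\<in>?A. v \<in> e} = {}\<close> by simp
  qed
  moreover have "degree EG v \<le> maxdeg VG EG" by (rule deg_le_maxdeg[OF sg_finV[OF gG] v])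
  ultimately show "degree (?A \<union> EG) v \<le> maxdeg VT ET + maxdeg VG EG" by linarith
qed

lemma poly_ineq:
  fixes D cT K :: real
  assumes D1: "D \<ge> 1" and cT: "cT \<ge> 0" and K: "K \<ge> 0"
    and DM: "D \<ge> 44*K + 10*cT + 120*(K*cT) + 11"
  shows "2*K*D^7 + K + 1 + D + 2*(cT*D^6)*D \<le> D^8/5"
    and "9*K + 20*K*D^7 + 120*K*cT*D^6 < D^8"
proof -
  define Y where "Y = D^7"
  have Y1: "1 \<le> Y" unfolding Y_def using D1 by simp
  have DY: "D \<le> Y" unfolding Y_def using power_increasing[of 1 7 D] D1 by simp
  have D6: "D^6 \<le> Y" unfolding Y_def using power_increasing[of 6 7 D] D1 by simp
  have D8: "D^8 = D * Y"
  proof -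
    have "D^8 = D^(1+7)" by simp
    also have "\<dots> = D^1 * D^7" by (rule power_add)
    finally show ?thesis unfolding Y_def by simp
  qed
  have D67: "D^6 * D = Y"
  proof -
    have "D^7 = D^(6+1)" by simp
    also have "\<dots> = D^6 * D^1" by (rule power_add)
    finally show ?thesis unfolding Y_def by simp
  qed
  have kc: "0 \<le> K * cT" using cT K by simp
  have kY: "K \<le> K * Y" using Y1 K by (simp add: mult_le_cancel_left1)
  have kc6: "K * cT * D^6 \<le> K * cT * Y" using D6 kc by (simp add: mult_left_mono)
  have "(3*K + 2 + 2*cT) \<le> D/5" using DM kc K cT by linarith
  hence "(3*K + 2 + 2*cT) * Y \<le> (D/5) * Y" using Y1 by (intro mult_right_mono) auto
  moreover have "2*K*D^7 + K + 1 + D + 2*(cT*D^6)*D \<le> (3*K + 2 + 2*cT) * Y"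
  proof -
    have a1: "2*(cT*D^6)*D = 2*(cT*Y)" using D67 by (simp add: algebra_simps)
    have a2: "2*K*D^7 = 2*(K*Y)" unfolding Y_def by simp
    have a3: "(3*K + 2 + 2*cT) * Y = 3*(K*Y) + 2*Y + 2*(cT*Y)" by (simp add: algebra_simps)
    show ?thesis unfolding a1 a2 a3 using kY Y1 DY by linarith
  qed
  ultimately show "2*K*D^7 + K + 1 + D + 2*(cT*D^6)*D \<le> D^8/5" using D8 by simp
  have "(29*K + 120*(K*cT) + 1) \<le> D" using DM kc K cT by linarith
  hence "(29*K + 120*(K*cT) + 1) * Y \<le> D * Y" using Y1 by (intro mult_right_mono) auto
  moreover have "9*K + 20*K*D^7 + 120*K*cT*D^6 < (29*K + 120*(K*cT) + 1) * Y"
  proof -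
    have a1: "20*K*D^7 = 20*(K*Y)" unfolding Y_def by simp
    have a2: "120*K*cT*D^6 = 120*(K*cT*D^6)" by simp
    have a3: "(29*K + 120*(K*cT) + 1) * Y = 29*(K*Y) + 120*(K*cT*Y) + Y" by (simp add: algebra_simps)
    show ?thesis unfolding a1 a2 a3 using kY kc6 Y1 K by linarith
  qed
  ultimately show "9*K + 20*K*D^7 + 120*K*cT*D^6 < D^8" using D8 by simp
qed


lemma root8:
  fixes x :: real assumes x: "x \<ge> 0"
  shows "(x powr (1/8))^8 = x" and "x powr (3/4) = (x powr (1/8))^6"
proof -
  show "(x powr (1/8))^8 = x"
  proof (cases "x = 0")
    case True thus ?thesis by simp
  next
    case False hence xp: "x > 0" using x by simp
    have "(x powr (1/8))^8 = (x powr (1/8)) powr (real 8)"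
      by (rule powr_realpow[symmetric]) (use xp in simp)
    also have "\<dots> = x powr (1/8 * 8)" by (simp add: powr_powr)
    also have "\<dots> = x" using xp by simp
    finally show ?thesis .
  qed
  show "x powr (3/4) = (x powr (1/8))^6"
  proof (cases "x = 0")
    case True thus ?thesis by simp
  next
    case False hence xp: "x > 0" using x by simp
    have "(x powr (1/8))^6 = (x powr (1/8)) powr (real 6)"
      by (rule powr_realpow[symmetric]) (use xp in simp)
    also have "\<dots> = x powr (1/8 * 6)" by (simp add: powr_powr)
    also have "\<dots> = x powr (3/4)" by simp
    finally show ?thesis by simp
  qed
qed

lemma root8_mono:
  fixes x y :: real assumes y: "y \<ge> 0" and le: "y^8 \<le> x"
  shows "y \<le> x powr (1/8)"
proof (cases "y = 0")
  case True thus ?thesis by simp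
next
  case False hence yp: "y > 0" using y by simp
  have "y = (y^8) powr (1/8)"
  proof -
    have "(y^8) powr (1/8) = (y powr (real 8)) powr (1/8)" using powr_realpow[OF yp, of 8] by simp
    also have "\<dots> = y powr (8 * (1/8))" by (simp add: powr_powr)
    also have "\<dots> = y" using yp by simp
    finally show ?thesis by simp
  qed
  also have "\<dots> \<le> x powr (1/8)" by (rule powr_mono2) (use le yp in auto)
  finally show ?thesis .
qed

lemma ev_big:
  fixes B :: real assumes "B \<ge> 0"
  shows "\<forall>n \<ge> nat \<lceil>B^8\<rceil>. B \<le> real n powr (1/8)"
proof (intro allI impI)
  fix n assume "n \<ge> nat \<lceil>B^8\<rceil>"
  hence "B^8 \<le> real n" by linarith
  thus "B \<le> real n powr (1/8)" using root8_mono assms by blast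
qed

lemma pw_smallo:
  fixes cT :: real assumes cT: "cT \<ge> 0"
  shows "(\<lambda>n::nat. cT * real n powr (3/4)) \<in> o(\<lambda>n. real n)"
proof (rule landau_o.smallI)
  fix c :: real assume c: "c > 0"
  define B where "B = cT / c + 1"
  have B1: "B \<ge> 1" unfolding B_def using cT c by simp
  have "\<forall>n \<ge> nat \<lceil>B^8\<rceil>. norm (cT * real n powr (3/4)) \<le> c * norm (real n)"
  proof (intro allI impI)
    fix n assume n: "n \<ge> nat \<lceil>B^8\<rceil>"
    define D where "D = real n powr (1/8)"
    have DB: "B \<le> D" using ev_big[of B] B1 n unfolding D_def by simp
    have e6: "real n powr (3/4) = D^6" unfolding D_def by (rule root8(2)) simp
    have e8: "real n = D^8" unfolding D_def by (rule root8(1)[symmetric]) simp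
    have D1: "D \<ge> 1" using DB B1 by linarith
    have "cT \<le> c * D"
    proof -
      have "c * B = cT + c" unfolding B_def using c by (simp add: field_simps)
      moreover have "c * B \<le> c * D" using DB c by simp
      ultimately show ?thesis using c by linarith
    qed
    also have "c * D \<le> c * D^2" using D1 c by (simp add: power2_eq_square)
    finally have "cT * D^6 \<le> c * D^2 * D^6" by (rule mult_right_mono) simp
    also have "\<dots> = c * D^8" by (simp add: power_add[symmetric] mult.assoc)
    finally show "norm (cT * real n powr (3/4)) \<le> c * norm (real n)"
      using e6 e8 cT by simp
  qed
  thus "eventually (\<lambda>n. norm (cT * real n powr (3/4)) \<le> c * norm (real n)) sequentially"
    unfolding eventually_sequentially by blast
qed


theorem lemma2:
  fixes k :: nat
  assumes "k \<ge> 1"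
  shows "\<forall>\<epsilon> :: nat \<Rightarrow> real. \<epsilon> \<in> o(\<lambda>n. real n) \<longrightarrow>
    (\<exists>\<delta> :: nat \<Rightarrow> real. \<delta> \<in> o(\<lambda>n. real n) \<and>
     (\<exists>N. \<forall>n \<ge> N.
       \<forall>(VG :: 'b set) EG (VT :: 'a set) ET I I' h'.
         sgraph VG EG \<and> card VG = n \<and> real (card EG) \<le> real k * real n \<and>
         real (maxdeg VG EG) < 2 * real n / 3 + \<epsilon> n \<and>
         tree VT ET \<and> card VT \<le> n \<and>
         real (maxdeg VT ET) < 60 * (2 * real k + 1) * real n powr (3/4) \<and>
         I \<subseteq> VG \<and> card I \<le> k \<and> (\<forall>v\<in>I. degree EG v \<le> 2 * k) \<and>
         I' \<subseteq> VT \<and> card I' = card I \<and> (\<forall>v\<in>I'. degree ET v \<le> 2) \<and>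
         packing I' (induced ET I') I (induced EG I) h'
         \<longrightarrow>
         (\<exists>f'. packing VT ET VG EG f' \<and>
            real (maxdeg VG ((\<lambda>e. f' ` e) ` ET \<union> EG)) \<le> 2 * real n / 3 + \<delta> n \<and>
            (\<forall>v\<in>I'. f' v = h' v))))"
proof (intro allI impI)
  fix \<epsilon> :: "nat \<Rightarrow> real" assume eps: "\<epsilon> \<in> o(\<lambda>n. real n)"
  define cT where "cT = 60 * (2 * real k + 1)"
  have cT0: "cT \<ge> 0" unfolding cT_def by simp
  define K where "K = real k"
  have K0: "K \<ge> 0" unfolding K_def by simp
  define M where "M = 44*K + 10*cT + 120*(K*cT) + 11 + 2*K"
  have M1: "M \<ge> 1" unfolding M_def using K0 cT0 by (simp add: mult_nonneg_nonneg)
  define \<delta> where "\<delta> = (\<lambda>n. \<epsilon> n + cT * real n powr (3/4))"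
  have del: "\<delta> \<in> o(\<lambda>n. real n)" unfolding \<delta>_def by (rule sum_in_smallo[OF eps pw_smallo[OF cT0]])
  have "eventually (\<lambda>n. norm (\<epsilon> n) \<le> (1/100) * norm (real n)) sequentially"
    by (rule landau_o.smallD[OF eps]) simp
  then obtain N1 where N1: "\<And>n. n \<ge> N1 \<Longrightarrow> norm (\<epsilon> n) \<le> (1/100) * norm (real n)"
    unfolding eventually_sequentially by blast
  define N where "N = max N1 (nat \<lceil>M^8\<rceil>)"
  show "\<exists>\<delta> :: nat \<Rightarrow> real. \<delta> \<in> o(\<lambda>n. real n) \<and>
     (\<exists>N. \<forall>n \<ge> N.
       \<forall>(VG :: 'b set) EG (VT :: 'a set) ET I I' h'.
         sgraph VG EG \<and> card VG = n \<and> real (card EG) \<le> real k * real n \<and>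
         real (maxdeg VG EG) < 2 * real n / 3 + \<epsilon> n \<and>
         tree VT ET \<and> card VT \<le> n \<and>
         real (maxdeg VT ET) < 60 * (2 * real k + 1) * real n powr (3/4) \<and>
         I \<subseteq> VG \<and> card I \<le> k \<and> (\<forall>v\<in>I. degree EG v \<le> 2 * k) \<and>
         I' \<subseteq> VT \<and> card I' = card I \<and> (\<forall>v\<in>I'. degree ET v \<le> 2) \<and>
         packing I' (induced ET I') I (induced EG I) h'
         \<longrightarrow>
         (\<exists>f'. packing VT ET VG EG f' \<and>
            real (maxdeg VG ((\<lambda>e. f' ` e) ` ET \<union> EG)) \<le> 2 * real n / 3 + \<delta> n \<and>
            (\<forall>v\<in>I'. f' v = h' v)))"
  proof (intro exI[of _ \<delta>] conjI del exI[of _ N] allI impI)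
    fix n and VG :: "'b set" and EG and VT :: "'a set" and ET I I' h'
    assume nN: "N \<le> n"
    assume H: "sgraph VG EG \<and> card VG = n \<and> real (card EG) \<le> real k * real n \<and>
         real (maxdeg VG EG) < 2 * real n / 3 + \<epsilon> n \<and>
         tree VT ET \<and> card VT \<le> n \<and>
         real (maxdeg VT ET) < 60 * (2 * real k + 1) * real n powr (3/4) \<and>
         I \<subseteq> VG \<and> card I \<le> k \<and> (\<forall>v\<in>I. degree EG v \<le> 2 * k) \<and>
         I' \<subseteq> VT \<and> card I' = card I \<and> (\<forall>v\<in>I'. degree ET v \<le> 2) \<and>
         packing I' (induced ET I') I (induced EG I) h'"
    have gG: "sgraph VG EG" and cVG: "card VG = n" and eG: "real (card EG) \<le> real k * real n"
      and dG: "real (maxdeg VG EG) < 2 * real n / 3 + \<epsilon> n" and tr: "tree VT ET" and cVT: "card VT \<le> n"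
      and dT: "real (maxdeg VT ET) < cT * real n powr (3/4)"
      and Isub: "I \<subseteq> VG" and Icard: "card I \<le> k" and Ideg: "\<forall>v\<in>I. degree EG v \<le> 2 * k"
      and I'sub: "I' \<subseteq> VT" and I'card: "card I' = card I" and I'deg: "\<forall>v\<in>I'. degree ET v \<le> 2"
      and pk: "packing I' (induced ET I') I (induced EG I) h'"
      using H unfolding cT_def by blast+
    have gT: "sgraph VT ET" and ETc: "card ET \<le> card VT" using tr unfolding tree_def by auto
    define D where "D = real n powr (1/8)"
    define DT where "DT = cT * real n powr (3/4)"
    define DG where "DG = real (maxdeg VG EG)"
    have DM: "M \<le> D" unfolding D_def using ev_big[of M] M1 nN unfolding N_def by simp
    have D1: "D \<ge> 1" using DM M1 by linarith
    have e8: "real n = D^8" unfolding D_def by (rule root8(1)[symmetric]) simp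
    have e6: "real n powr (3/4) = D^6" unfolding D_def by (rule root8(2)) simp
    have e7: "real n / D = D^7"
    proof -
      have "D^8 = D^7 * D" by (simp add: power_Suc2[symmetric] del: power_Suc)
      thus ?thesis using e8 D1 by simp
    qed
    have epsn: "\<epsilon> n \<le> real n / 100" using N1[of n] nN unfolding N_def by simp
    have P: "2*K*D^7 + K + 1 + D + 2*(cT*D^6)*D \<le> D^8/5"
         "9*K + 20*K*D^7 + 120*K*cT*D^6 < D^8"
    proof -
      have DM': "44*K + 10*cT + 120*(K*cT) + 11 \<le> D" using DM K0 unfolding M_def by linarith
      show "2*K*D^7 + K + 1 + D + 2*(cT*D^6)*D \<le> D^8/5" by (rule poly_ineq(1)[OF D1 cT0 K0 DM'])
      show "9*K + 20*K*D^7 + 120*K*cT*D^6 < D^8" by (rule poly_ineq(2)[OF D1 cT0 K0 DM'])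
    qed
    have npos: "real n \<ge> 1" using e8 D1 by (simp add: one_le_power)
    interpret P: pk VG EG VT ET I I' h' k D DT DG
    proof (unfold_locales)
      show "sgraph VG EG" by (rule gG)
      show "sgraph VT ET" by (rule gT)
      show "real (card EG) \<le> real k * real (card VG)" using eG cVG by simp
      show "card VT \<le> card VG" using cVT cVG by simp
      show "card ET \<le> card VT" by (rule ETc)
      show "\<And>v. v \<in> VT \<Longrightarrow> real (degree ET v) \<le> DT"
      proof -
        fix v assume "v \<in> VT"
        hence "degree ET v \<le> maxdeg VT ET" by (rule deg_le_maxdeg[OF sg_finV[OF gT]])
        thus "real (degree ET v) \<le> DT" using dT unfolding DT_def by linarith
      qed
      show "\<And>v. v \<in> VG \<Longrightarrow> real (degree EG v) \<le> DG"
        unfolding DG_def using deg_le_maxdeg[OF sg_finV[OF gG]] by simp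
      show "I \<subseteq> VG" "card I \<le> k" by (rule Isub, rule Icard)
      show "\<And>v. v \<in> I \<Longrightarrow> real (degree EG v) \<le> D"
      proof -
        fix v assume "v \<in> I"
        hence "real (degree EG v) \<le> 2 * K" using Ideg unfolding K_def by fastforce
        moreover have "2 * K \<le> M" unfolding M_def using K0 cT0 by (simp add: mult_nonneg_nonneg)
        ultimately show "real (degree EG v) \<le> D" using DM by linarith
      qed
      show "I' \<subseteq> VT" "card I' = card I" by (rule I'sub, rule I'card)
      show "\<And>v. v \<in> I' \<Longrightarrow> degree ET v \<le> 2" using I'deg by blast
      show "packing I' (induced ET I') I (induced EG I) h'" by (rule pk)
      show "0 < D" using D1 by simp
      show "0 \<le> DT" unfolding DT_def using cT0 by simp
      show "0 \<le> DG" unfolding DG_def by simp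
      show "real (2 * k) * real (card VG) / D + real k + 1 + D + DG + real (card VG) / 10 + 2 * DT * D < real (card VG)"
      proof -
        have a1: "real (2 * k) * real n / D = 2*K*D^7"
        proof -
          have "real (2 * k) * real n / D = real (2 * k) * (real n / D)" by simp
          thus ?thesis using e7 unfolding K_def by simp
        qed
        have a2: "2 * DT * D = 2*(cT*D^6)*D" unfolding DT_def e6 by simp
        have a3: "DG < 2 * real n / 3 + real n / 100" using dG epsn unfolding DG_def by linarith
        show ?thesis unfolding cVG a1 a2 using P(1) a3 e8 K_def by linarith
      qed
      show "real (3 * k) + real (6 * k) * real (card VG) / D + real (40 * k) * DT < (real (card VG) - real (2 * k) * real (card VG) / D) / 3"
      proof -
        have a1: "real (2 * k) * real n / D = 2*K*D^7"
        proof -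
          have "real (2 * k) * real n / D = real (2 * k) * (real n / D)" by simp
          thus ?thesis using e7 unfolding K_def by simp
        qed
        have a2: "real (6 * k) * real n / D = 6*K*D^7"
        proof -
          have "real (6 * k) * real n / D = real (6 * k) * (real n / D)" by simp
          thus ?thesis using e7 unfolding K_def by simp
        qed
        have a3: "real (40 * k) * DT = 40*K*cT*D^6" unfolding DT_def e6 K_def by simp
        have a4: "real (3 * k) = 3 * K" unfolding K_def by simp
        have b1: "20 * K * D^7 = 20 * (K * D^7)" "6 * K * D^7 = 6 * (K * D^7)" "2 * K * D^7 = 2 * (K * D^7)"
          "120 * K * cT * D^6 = 120 * (K * cT * D^6)" "40 * K * cT * D^6 = 40 * (K * cT * D^6)" by simp_all
        have b2: "(real n - 2 * (K * D^7)) / 3 = real n / 3 - 2 * (K * D^7) / 3" by (simp add: diff_divide_distrib)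
        show ?thesis unfolding cVG a1 a2 a3 a4 b1 b2 using P(2) e8 unfolding b1 by linarith
      qed
    qed
    obtain f where f: "packing VT ET VG EG f" "\<forall>v\<in>I'. f v = h' v" using P.exists_packing by blast
    have "maxdeg VG ((\<lambda>e. f ` e) ` ET \<union> EG) \<le> maxdeg VT ET + maxdeg VG EG"
      using deg_union[OF gT gG] f(1) unfolding packing_def by blast
    hence "real (maxdeg VG ((\<lambda>e. f ` e) ` ET \<union> EG)) \<le> real (maxdeg VT ET) + real (maxdeg VG EG)"
      by linarith
    also have "\<dots> \<le> 2 * real n / 3 + \<delta> n" using dT dG unfolding \<delta>_def by linarith
    finally show "\<exists>f'. packing VT ET VG EG f' \<and>
            real (maxdeg VG ((\<lambda>e. f' ` e) ` ET \<union> EG)) \<le> 2 * real n / 3 + \<delta> n \<and>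
            (\<forall>v\<in>I'. f' v = h' v)" using f by blast
  qed
qed

end
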